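(* Uniform (vanilla) federation is modular. That is, with $\mu_e>0,\sigma^2>0$ and error $$err_j(C)=\frac{\mu_e}{\sum_{i\in C}n_i}+\sigma^2\cdot\frac{\sum_{i\in C,i\neq j}n_i^2+\left(\sum_{i\in C,i\neq j}n_i\right)^2}{\left(\sum_{i\in C}n_i\right)^2},$$ for every coalition $C$ and players $s,l\in C$ with $n_s\le n_l$ the following hold: (P1) $\frac{err_s(C)}{err_l(C)}\ge1$, with $err_s(C)>err_l(C)$ if $n_s<n_l$; (P2) $\frac{err_s(C)}{err_l(C)}\le\frac{err_s(\{n_s,n_l\})}{err_l(\{n_s,n_l\})}$; (P3) $\frac{\partial}{\partial n_l}\frac{err_s(\{n_s,n_l\})}{err_l(\{n_s,n_l\})}\ge0$; (P4) $\frac{\partial}{\partial n_s}\frac{err_s(\{n_s,n_l\})}{err_l(\{n_s,n_l\})}\le0$; (P5) $\lim_{n_s/n_l\to0}\frac{err_s(\{n_s,n_l\})}{err_l(\{n_s,n_l\})}=\frac{\mu_e/n_l+2\sigma^2}{\mu_e/n_l}$.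
   Context: Players $i$ have sample sizes $n_i>0$; a coalition is a set of players. In the mean-estimation model, $\mu_e$ is the average sampling noise (expected variance of a player's sample distribution) and $\sigma^2$ is the variance of players' true means. Under uniform (vanilla) federation, a coalition uses the sample-weighted average of local mean estimates, giving player $j\in C$ the expected squared error in the claim. $err_s(\{n_s,n_l\})$ denotes the error of player $s$ in the two-player coalition $\{s,l\}$, viewed as a function of $n_s,n_l$ (similarly for $l$). *)

theory Defs
  imports Complex_Main
begin

definition err :: "real \<Rightarrow> real \<Rightarrow> ('a \<Rightarrow> real) \<Rightarrow> 'a set \<Rightarrow> 'a \<Rightarrow> real" where
  "err mu s2 n C j =
     mu / (\<Sum>i\<in>C. n i)
     + s2 * ((\<Sum>i\<in>C - {j}. (n i)^2) + (\<Sum>i\<in>C - {j}. n i)^2) / (\<Sum>i\<in>C. n i)^2"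

text \<open>Two-player coalition {s,l}: players are False (= s, size ns) and True (= l, size nl).\<close>
definition pair_sizes :: "real \<Rightarrow> real \<Rightarrow> bool \<Rightarrow> real" where
  "pair_sizes ns nl = (\<lambda>i. if i then nl else ns)"

definition err_s2 :: "real \<Rightarrow> real \<Rightarrow> real \<Rightarrow> real \<Rightarrow> real" where
  "err_s2 mu s2 ns nl = err mu s2 (pair_sizes ns nl) UNIV False"

definition err_l2 :: "real \<Rightarrow> real \<Rightarrow> real \<Rightarrow> real \<Rightarrow> real" where
  "err_l2 mu s2 ns nl = err mu s2 (pair_sizes ns nl) UNIV True"

definition pair_ratio :: "real \<Rightarrow> real \<Rightarrow> real \<Rightarrow> real \<Rightarrow> real" where
  "pair_ratio mu s2 ns nl = err_s2 mu s2 ns nl / err_l2 mu s2 ns nl"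

end

theory Submission
  imports Defs
begin

lemma pr_eq: "a + b \<noteq> 0 \<Longrightarrow> pair_ratio mu s2 a b = (mu*(a+b) + 2*s2*b^2)/(mu*(a+b)+2*s2*a^2)"
proof -
  assume h: "a + b \<noteq> 0"
  have s: "err_s2 mu s2 a b = (mu*(a+b) + 2*s2*b^2) / (a+b)^2"
    unfolding err_s2_def err_def pair_sizes_def using h
    by (simp add: UNIV_bool add_divide_distrib power2_eq_square)
  have l: "err_l2 mu s2 a b = (mu*(a+b) + 2*s2*a^2) / (a+b)^2"
    unfolding err_l2_def err_def pair_sizes_def using h
    by (simp add: UNIV_bool add_divide_distrib power2_eq_square)
  show ?thesis unfolding pair_ratio_def s l using h by simp
qed

lemma alg:
  fixes mu s2 a b X Y :: real
  assumes mu: "mu > 0" and s2: "s2 > 0" and a: "0 < a" and ab: "a \<le> b" and X: "X \<ge> 0" and Y: "Y \<ge> 0"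
  defines "N \<equiv> a + b + X"
  defines "Es \<equiv> mu / N + s2 * (b^2 + Y + (b+X)^2) / N^2"
  defines "El \<equiv> mu / N + s2 * (a^2 + Y + (a+X)^2) / N^2"
  shows "El > 0" "Es = El + 2*s2*(b-a)/N" "Es / El \<le> (mu*(a+b) + 2*s2*b^2)/(mu*(a+b)+2*s2*a^2)"
proof -
  have N: "N > 0" using a ab X N_def by simp
  have p: "s2 * (a^2 + Y + (a+X)^2) / N^2 \<ge> 0" using s2 Y by simp
  show El: "El > 0" unfolding El_def using mu N p by (simp add: add_pos_nonneg)
  have e: "b^2 + Y + (b+X)^2 = (a^2 + Y + (a+X)^2) + 2*(b-a)*N"
    unfolding N_def by (simp add: algebra_simps power2_eq_square)
  show Es: "Es = El + 2*s2*(b-a)/N" unfolding Es_def El_def e using N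
    by (simp add: add_divide_distrib distrib_left power2_eq_square)
  define M where "M = a + b"
  have M: "M > 0" using a ab M_def by simp
  define El' where "El' = mu + s2 * 2*a^2/M"
  have El'pos: "El' > 0" unfolding El'_def using mu s2 M by (simp add: add_pos_nonneg)
  have NEl: "N * El = mu + s2 * (a^2 + Y + (a+X)^2) / N" unfolding El_def using N
    by (simp add: field_simps power2_eq_square)
  have key: "(a^2 + Y + (a+X)^2) / N \<ge> 2*a^2/M"
  proof -
    have "(a^2 + Y + (a+X)^2) * M \<ge> 2*a^2 * N"
    proof -
      have "(a^2 + Y + (a+X)^2) * M \<ge> (2*a^2 + 2*a*X) * M"
        using M Y X a by (intro mult_right_mono) (auto simp: power2_eq_square algebra_simps)
      moreover have "(2*a^2 + 2*a*X) * M \<ge> 2*a^2*N"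
        unfolding M_def N_def using a ab X by (simp add: algebra_simps power2_eq_square mult_left_mono)
      ultimately show ?thesis by linarith
    qed
    thus ?thesis using M N by (simp add: divide_simps)
  qed
  have "N * El \<ge> El'" unfolding NEl El'_def
    using mult_left_mono[OF key less_imp_le[OF s2]] by (simp add: mult.assoc)
  hence q: "2*s2*(b-a)/(N*El) \<le> 2*s2*(b-a)/El'"
    using El'pos s2 ab by (intro divide_left_mono) (auto intro: mult_pos_pos)
  have "Es / El = 1 + 2*s2*(b-a)/(N*El)" using Es El N by (simp add: field_simps)
  also have "\<dots> \<le> 1 + 2*s2*(b-a)/El'" using q by simp
  also have "\<dots> = (mu*(a+b) + 2*s2*b^2)/(mu*(a+b)+2*s2*a^2)"
    unfolding El'_def M_def using M M_def mu s2 a ab El'pos El'_def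
    by (simp add: field_simps power2_eq_square)
  finally show "Es / El \<le> (mu*(a+b) + 2*s2*b^2)/(mu*(a+b)+2*s2*a^2)" .
qed

lemma coal:
  fixes n :: "'a \<Rightarrow> real"
  assumes C: "finite C" and pos: "\<forall>i\<in>C. n i > 0" and sC: "s \<in> C" and lC: "l \<in> C" and sl: "s \<noteq> l"
  defines "X \<equiv> (\<Sum>i\<in>C - {s} - {l}. n i)"
  defines "Y \<equiv> (\<Sum>i\<in>C - {s} - {l}. (n i)^2)"
  shows "X \<ge> 0" "Y \<ge> 0"
    "err mu sg n C s = mu / (n s + n l + X) + sg * ((n l)^2 + Y + (n l + X)^2) / (n s + n l + X)^2"
    "err mu sg n C l = mu / (n s + n l + X) + sg * ((n s)^2 + Y + (n s + X)^2) / (n s + n l + X)^2"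
proof -
  show "X \<ge> 0" unfolding X_def using pos by (intro sum_nonneg) auto
  show "Y \<ge> 0" unfolding Y_def by (intro sum_nonneg) auto
  have e1: "C - {l} - {s} = C - {s} - {l}" by blast
  have tot: "(\<Sum>i\<in>C. n i) = n s + n l + X"
    using C sC lC sl unfolding X_def
    by (simp add: sum.remove[of C s] sum.remove[of "C - {s}" l])
  have a1: "(\<Sum>i\<in>C - {s}. n i) = n l + X" using C lC sl unfolding X_def
    by (simp add: sum.remove[of "C - {s}" l])
  have a2: "(\<Sum>i\<in>C - {s}. (n i)^2) = (n l)^2 + Y" using C lC sl unfolding Y_def
    by (simp add: sum.remove[of "C - {s}" l])
  have b1: "(\<Sum>i\<in>C - {l}. n i) = n s + X" using C sC sl unfolding X_def e1[symmetric]
    by (simp add: sum.remove[of "C - {l}" s])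
  have b2: "(\<Sum>i\<in>C - {l}. (n i)^2) = (n s)^2 + Y" using C sC sl unfolding Y_def e1[symmetric]
    by (simp add: sum.remove[of "C - {l}" s])
  show "err mu sg n C s = mu / (n s + n l + X) + sg * ((n l)^2 + Y + (n l + X)^2) / (n s + n l + X)^2"
    unfolding err_def tot a1 a2 ..
  show "err mu sg n C l = mu / (n s + n l + X) + sg * ((n s)^2 + Y + (n s + X)^2) / (n s + n l + X)^2"
    unfolding err_def tot b1 b2 ..
qed

lemma errpos:
  fixes n :: "'a \<Rightarrow> real"
  assumes "mu > 0" "s2 > 0" "finite C" "\<forall>i\<in>C. n i > 0" "l \<in> C"
  shows "err mu s2 n C l > 0"
proof -
  have N: "(\<Sum>i\<in>C. n i) > 0" using assms by (intro sum_pos2[of C l]) auto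
  have "s2 * ((\<Sum>i\<in>C - {l}. (n i)^2) + (\<Sum>i\<in>C - {l}. n i)^2) / (\<Sum>i\<in>C. n i)^2 \<ge> 0"
    using assms N by (intro divide_nonneg_pos mult_nonneg_nonneg add_nonneg_nonneg sum_nonneg) auto
  thus ?thesis unfolding err_def by (rule add_pos_nonneg[OF divide_pos_pos[OF assms(1) N]])
qed

theorem lemma4p4:
  fixes mu s2 :: real
  assumes mu_pos: "mu > 0" and s2_pos: "s2 > 0"
  shows
    "(\<forall>(C :: 'a set) (n :: 'a \<Rightarrow> real) s l.
        finite C \<longrightarrow> (\<forall>i\<in>C. n i > 0) \<longrightarrow> s \<in> C \<longrightarrow> l \<in> C \<longrightarrow> n s \<le> n l \<longrightarrow>
          err mu s2 n C s / err mu s2 n C l \<ge> 1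
          \<and> (n s < n l \<longrightarrow> err mu s2 n C s > err mu s2 n C l)
          \<and> err mu s2 n C s / err mu s2 n C l \<le> pair_ratio mu s2 (n s) (n l))
     \<and>
     (\<forall>ns nl. 0 < ns \<longrightarrow> ns \<le> nl \<longrightarrow>
        (\<exists>D. ((\<lambda>x. pair_ratio mu s2 ns x) has_real_derivative D) (at nl) \<and> D \<ge> 0))
     \<and>
     (\<forall>ns nl. 0 < ns \<longrightarrow> ns \<le> nl \<longrightarrow>
        (\<exists>D. ((\<lambda>x. pair_ratio mu s2 x nl) has_real_derivative D) (at ns) \<and> D \<le> 0))
     \<and>
     (\<forall>nl. 0 < nl \<longrightarrow>
        ((\<lambda>ns. pair_ratio mu s2 ns nl) \<longlongrightarrow> (mu / nl + 2 * s2) / (mu / nl)) (at_right 0))"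
proof (intro conjI allI impI)
  fix C :: "'a set" and n :: "'a \<Rightarrow> real" and s l
  assume C: "finite C" and pos: "\<forall>i\<in>C. n i > 0" and sC: "s \<in> C" and lC: "l \<in> C" and le: "n s \<le> n l"
  have Elpos: "err mu s2 n C l > 0" using errpos[OF mu_pos s2_pos C pos lC] .
  have a: "n s > 0" using pos sC by auto
  have H: "err mu s2 n C s / err mu s2 n C l \<ge> 1
   \<and> (n s < n l \<longrightarrow> err mu s2 n C s > err mu s2 n C l)
   \<and> err mu s2 n C s / err mu s2 n C l \<le> pair_ratio mu s2 (n s) (n l)"
  proof -
    consider "s = l" | "s \<noteq> l" by blast
    then have "err mu s2 n C s \<ge> err mu s2 n C l \<and> (n s < n l \<longrightarrow> err mu s2 n C s > err mu s2 n C l)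
         \<and> err mu s2 n C s / err mu s2 n C l \<le> pair_ratio mu s2 (n s) (n l)"
    proof cases
      case 1
      have d: "mu * (n l + n l) + 2 * s2 * (n l)\<^sup>2 > 0" using mu_pos s2_pos a le
        by (intro add_pos_nonneg) auto
      show ?thesis using 1 Elpos d a le pr_eq[of "n l" "n l" mu s2] by simp
    next
      case 2
      note cc = coal(1,2)[OF C pos sC lC 2] coal(3,4)[where mu=mu and sg=s2, OF C pos sC lC 2]
      note A = alg[OF mu_pos s2_pos a le cc(1) cc(2)]
      have q: "0 \<le> 2 * s2 * (n l - n s) / (n s + n l + (\<Sum>i\<in>C - {s} - {l}. n i))"
        using s2_pos le a cc(1) by (intro divide_nonneg_pos) auto
      have q2: "n s < n l \<Longrightarrow> 0 < 2 * s2 * (n l - n s) / (n s + n l + (\<Sum>i\<in>C - {s} - {l}. n i))"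
        using s2_pos le a cc(1) by (intro divide_pos_pos) auto
      have pe: "pair_ratio mu s2 (n s) (n l) = (mu*(n s+n l) + 2*s2*(n l)^2)/(mu*(n s+n l)+2*s2*(n s)^2)"
        using pr_eq[of "n s" "n l" mu s2] a le by simp
      show ?thesis unfolding cc(3) cc(4) pe using q q2 A
        by auto
    qed
    thus ?thesis using Elpos by auto
  qed
  show "err mu s2 n C s / err mu s2 n C l \<ge> 1" using H by blast
  show "err mu s2 n C s > err mu s2 n C l" if "n s < n l" using H that by blast
  show "err mu s2 n C s / err mu s2 n C l \<le> pair_ratio mu s2 (n s) (n l)" using H by blast
next
  fix a b :: real assume a: "0 < a" and ab: "a \<le> b"
  define g where "g = mu*(a+b)+2*s2*a^2"
  have g: "g > 0" unfolding g_def using mu_pos s2_pos a ab by (intro add_pos_nonneg) auto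
  have df: "((\<lambda>x. mu*(a+x)+2*s2*x^2) has_real_derivative (mu + 4*s2*b)) (at b)"
    by (auto intro!: derivative_eq_intros)
  have dg: "((\<lambda>x. mu*(a+x)+2*s2*a^2) has_real_derivative mu) (at b)"
    by (auto intro!: derivative_eq_intros)
  have D: "((\<lambda>x. (mu*(a+x)+2*s2*x^2) / (mu*(a+x)+2*s2*a^2)) has_real_derivative
     ((mu + 4*s2*b) * g - (mu*(a+b)+2*s2*b^2) * mu) / (g * g)) (at b)"
    using DERIV_divide[OF df dg] g unfolding g_def by simp
  have D2: "((\<lambda>x. pair_ratio mu s2 a x) has_real_derivative
     ((mu + 4*s2*b) * g - (mu*(a+b)+2*s2*b^2) * mu) / (g * g)) (at b)"
    by (rule has_field_derivative_transform_within_open[OF D, of "{0<..}"])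
       (use a ab pr_eq in auto)
  have "(mu + 4*s2*b) * g - (mu*(a+b)+2*s2*b^2) * mu = 2*mu*s2*(a^2-b^2) + 4*s2*b*g"
    unfolding g_def by (simp add: algebra_simps power2_eq_square)
  also have "\<dots> \<ge> 0"
  proof -
    have "4*s2*b*g \<ge> 4*s2*b*(mu*(a+b))" unfolding g_def using s2_pos a ab by (intro mult_left_mono) auto
    moreover have "4*s2*b*(mu*(a+b)) \<ge> 2*mu*s2*(b^2-a^2)"
    proof -
      have "2*(b^2-a^2) \<le> 4*b*(a+b)" using a ab by (simp add: power2_eq_square algebra_simps)
      hence "(mu*s2)*(2*(b^2-a^2)) \<le> (mu*s2)*(4*b*(a+b))" using mu_pos s2_pos by (intro mult_left_mono) auto
      thus ?thesis by (simp add: algebra_simps)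
    qed
    ultimately show ?thesis by (simp add: algebra_simps)
  qed
  finally show "\<exists>D. ((\<lambda>x. pair_ratio mu s2 a x) has_real_derivative D) (at b) \<and> D \<ge> 0"
    using D2 by (intro exI[of _ "((mu + 4*s2*b) * g - (mu*(a+b)+2*s2*b^2) * mu) / (g * g)"]) simp
next
  fix a b :: real assume a: "0 < a" and ab: "a \<le> b"
  define g where "g = mu*(a+b)+2*s2*a^2"
  define f where "f = mu*(a+b)+2*s2*b^2"
  have g: "g > 0" unfolding g_def using mu_pos s2_pos a ab by (intro add_pos_nonneg) auto
  have f: "f > 0" unfolding f_def using mu_pos s2_pos a ab by (intro add_pos_nonneg) auto
  have df: "((\<lambda>x. mu*(x+b)+2*s2*b^2) has_real_derivative mu) (at a)"
    by (auto intro!: derivative_eq_intros)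
  have dg: "((\<lambda>x. mu*(x+b)+2*s2*x^2) has_real_derivative (mu + 4*s2*a)) (at a)"
    by (auto intro!: derivative_eq_intros)
  have D: "((\<lambda>x. (mu*(x+b)+2*s2*b^2) / (mu*(x+b)+2*s2*x^2)) has_real_derivative
     (mu * g - f * (mu + 4*s2*a)) / (g * g)) (at a)"
    using DERIV_divide[OF df dg] g unfolding g_def f_def by simp
  have D2: "((\<lambda>x. pair_ratio mu s2 x b) has_real_derivative
     (mu * g - f * (mu + 4*s2*a)) / (g * g)) (at a)"
    by (rule has_field_derivative_transform_within_open[OF D, of "{0<..}"])
       (use a ab pr_eq in auto)
  have "mu * g - f * (mu + 4*s2*a) = 2*mu*s2*(a^2-b^2) - 4*s2*a*f"
    unfolding g_def f_def by (simp add: algebra_simps power2_eq_square)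
  also have "\<dots> \<le> 0"
  proof -
    have "a^2 \<le> b^2" using a ab by (intro power_mono) auto
    hence "2*mu*s2*(a^2-b^2) \<le> 0" using mu_pos s2_pos by (intro mult_nonneg_nonpos) auto
    moreover have "4*s2*a*f \<ge> 0" using s2_pos a f by auto
    ultimately show ?thesis by linarith
  qed
  finally show "\<exists>D. ((\<lambda>x. pair_ratio mu s2 x b) has_real_derivative D) (at a) \<and> D \<le> 0"
    using D2 g by (intro exI[of _ "(mu * g - f * (mu + 4*s2*a)) / (g * g)"]) (simp add: divide_nonpos_pos)
next
  fix b :: real assume b: "0 < b"
  have t: "((\<lambda>x. (mu*(x+b)+2*s2*b^2) / (mu*(x+b)+2*s2*x^2)) \<longlongrightarrow>
      (mu*(0+b)+2*s2*b^2) / (mu*(0+b)+2*s2*0^2)) (at_right 0)"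
    using mu_pos b by (intro tendsto_intros) auto
  have ev: "eventually (\<lambda>x. (mu*(x+b)+2*s2*b^2) / (mu*(x+b)+2*s2*x^2) = pair_ratio mu s2 x b) (at_right 0)"
  proof -
    have "eventually (\<lambda>x::real. x > 0) (at_right 0)" by (rule eventually_at_right_less)
    thus ?thesis
    proof eventually_elim
      case (elim x)
      have "x + b \<noteq> 0" using elim b by linarith
      from pr_eq[OF this, of mu s2] show ?case by (simp add: add.commute)
    qed
  qed
  have val: "(mu*(0+b)+2*s2*b^2) / (mu*(0+b)+2*s2*0^2) = (mu / b + 2 * s2) / (mu / b)"
    using b mu_pos by (simp add: field_simps power2_eq_square)
  show "((\<lambda>ns. pair_ratio mu s2 ns b) \<longlongrightarrow> (mu / b + 2 * s2) / (mu / b)) (at_right 0)"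
    using Lim_transform_eventually[OF t ev] val by simp
qed

end
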